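(* Suppose $K\in C^2([-1,0])$ with $K_p>0$ is such that $h(q,p)=K(p)$ solves the height equation, and that $\mathscr S(K)=\mathscr S(H)$. Then $$\int_{-1}^0\frac{(K_p-H_p)^3}{H_p^2K_p^2}\,dp=0.$$
   Context: Fix $\alpha\in(0,1)$, $\rho\in C^{2+\alpha}([-1,0])$ with $\rho>0$, $\rho_p\le0$, $H\in C^{3+\alpha}([-1,0])$ with $H(-1)=0$, $H(0)=1$, $H_p>0$, and $F>0$. With $R=\mathbb R\times(-1,0)$, $T=\{p=0\}$, $B=\{p=-1\}$, the height equation for $h$ is $\big(-\frac{1+h_q^2}{2h_p^2}+\frac1{2H_p^2}\big)_p+\big(\frac{h_q}{h_p}\big)_q-\frac1{F^2}\rho_p(h-H)=0$ in $R$, $\frac{1+h_q^2}{2h_p^2}-\frac1{2H_p^2}+\frac1{F^2}\rho(h-1)=0$ on $T$, $h=0$ on $B$. The flow force of a $q$-independent $h=K(p)$ is $\mathscr S(K)=\int_{-1}^0\Big[\frac1{2K_p^2}+\frac1{2H_p^2}-\frac1{F^2}\rho(K-H)-\frac1{F^2}\int_0^p\rho H_p\,dp'\Big]K_p\,dp$. *)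

theory Defs
  imports "HOL-Analysis.Analysis"
begin

abbreviation I01 :: "real set" where "I01 \<equiv> {-1..0}"

definition dp :: "(real \<Rightarrow> real) \<Rightarrow> real \<Rightarrow> real" where
  "dp f p = vector_derivative f (at p within I01)"

definition Ck :: "nat \<Rightarrow> (real \<Rightarrow> real) \<Rightarrow> bool" where
  "Ck k f \<longleftrightarrow> (\<exists>D :: nat \<Rightarrow> real \<Rightarrow> real.
      (\<forall>x\<in>I01. D 0 x = f x) \<and>
      (\<forall>j<k. \<forall>x\<in>I01. (D j has_real_derivative D (Suc j) x) (at x within I01)) \<and>
      continuous_on I01 (D k))"

definition Ck_alpha :: "nat \<Rightarrow> real \<Rightarrow> (real \<Rightarrow> real) \<Rightarrow> bool" where
  "Ck_alpha k \<alpha> f \<longleftrightarrow> (\<exists>D :: nat \<Rightarrow> real \<Rightarrow> real.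
      (\<forall>x\<in>I01. D 0 x = f x) \<and>
      (\<forall>j<k. \<forall>x\<in>I01. (D j has_real_derivative D (Suc j) x) (at x within I01)) \<and>
      continuous_on I01 (D k) \<and>
      (\<exists>C. \<forall>x\<in>I01. \<forall>y\<in>I01. \<bar>D k x - D k y\<bar> \<le> C * \<bar>x - y\<bar> powr \<alpha>))"

definition hq :: "(real \<times> real \<Rightarrow> real) \<Rightarrow> real \<Rightarrow> real \<Rightarrow> real" where
  "hq h q p = vector_derivative (\<lambda>s. h (s, p)) (at q)"

definition hp :: "(real \<times> real \<Rightarrow> real) \<Rightarrow> real \<Rightarrow> real \<Rightarrow> real" where
  "hp h q p = vector_derivative (\<lambda>s. h (q, s)) (at p within I01)"

text \<open>The height equation (classical sense): PDE in R, Bernoulli condition on T, h = 0 on B.\<close>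
definition height_eq :: "(real \<Rightarrow> real) \<Rightarrow> (real \<Rightarrow> real) \<Rightarrow> real \<Rightarrow> (real \<times> real \<Rightarrow> real) \<Rightarrow> bool" where
  "height_eq \<rho> H F h \<longleftrightarrow>
     (\<forall>q p. -1 < p \<and> p < 0 \<longrightarrow>
        vector_derivative (\<lambda>s. - (1 + (hq h q s)\<^sup>2) / (2 * (hp h q s)\<^sup>2) + 1 / (2 * (dp H s)\<^sup>2)) (at p)
        + vector_derivative (\<lambda>s. hq h s p / hp h s p) (at q)
        - 1 / F\<^sup>2 * dp \<rho> p * (h (q, p) - H p) = 0) \<and>
     (\<forall>q. (1 + (hq h q 0)\<^sup>2) / (2 * (hp h q 0)\<^sup>2) - 1 / (2 * (dp H 0)\<^sup>2)
          + 1 / F\<^sup>2 * \<rho> 0 * (h (q, 0) - 1) = 0) \<and>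
     (\<forall>q. h (q, -1) = 0)"

text \<open>Flow force of a q-independent height function K; note int_0^p = - int_p^0 for p \<le> 0.\<close>
definition flow_force :: "(real \<Rightarrow> real) \<Rightarrow> (real \<Rightarrow> real) \<Rightarrow> real \<Rightarrow> (real \<Rightarrow> real) \<Rightarrow> real" where
  "flow_force \<rho> H F K = integral I01 (\<lambda>p.
      (1 / (2 * (dp K p)\<^sup>2) + 1 / (2 * (dp H p)\<^sup>2) - 1 / F\<^sup>2 * \<rho> p * (K p - H p)
       - 1 / F\<^sup>2 * (- integral {p..0} (\<lambda>s. \<rho> s * dp H s))) * dp K p)"

end

theory Submission
  imports Defs
begin

lemma alg:
  fixes a b F r u N M w :: real
  assumes a: "a>0" and b: "b>0" and F: "F>0" and hyp: "1/(2*b\<^sup>2) - 1/(2*a\<^sup>2) = (r*u+N)/F\<^sup>2"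
  shows "(1/(2*a\<^sup>2) + 1/(2*b\<^sup>2) - 1/F\<^sup>2*r*u - 1/F\<^sup>2*(-M))*a - (1/(2*b\<^sup>2)+1/(2*b\<^sup>2) - 1/F\<^sup>2*r*(w-w) - 1/F\<^sup>2*(-M))*b - (a-b)^3/(b\<^sup>2*a\<^sup>2)/4 = ((-(r*b) - r*(a-b)/2)*u + (M+N/2)*(a-b))/F\<^sup>2"
proof -
  have N: "N = F\<^sup>2*(1/(2*b\<^sup>2) - 1/(2*a\<^sup>2)) - r*u" using hyp F by (simp add: field_simps)
  show ?thesis unfolding N using a b F by (simp add: field_simps power2_eq_square power3_eq_cube)
qed

lemma Ck_facts:
  assumes "Ck 2 f"
  obtains f1 f2 where
    "\<And>x. x \<in> I01 \<Longrightarrow> (f has_real_derivative f1 x) (at x within I01)"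
    "\<And>x. x \<in> I01 \<Longrightarrow> (f1 has_real_derivative f2 x) (at x within I01)"
    "\<And>x. x \<in> I01 \<Longrightarrow> dp f x = f1 x"
    "continuous_on I01 f" "continuous_on I01 f1"
proof -
  obtain D where D0: "\<forall>x\<in>I01. D 0 x = f x"
    and Dd: "\<forall>j<2. \<forall>x\<in>I01. (D j has_real_derivative D (Suc j) x) (at x within I01)"
    using assms unfolding Ck_def by blast
  have d1: "(f has_real_derivative D 1 x) (at x within I01)" if "x \<in> I01" for x
    using has_field_derivative_transform_within[OF Dd[rule_format, of 0 x] zero_less_one] that D0 by auto
  have d2: "(D 1 has_real_derivative D 2 x) (at x within I01)" if "x \<in> I01" for x
    using Dd[rule_format, of 1 x] that by (simp add: numeral_2_eq_2)
  have dp: "dp f x = D 1 x" if "x \<in> I01" for x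
    unfolding dp_def using vector_derivative_within_closed_interval[of "-1" 0 x f "D 1 x"] d1[OF that] that
    by (simp add: has_real_derivative_iff_has_vector_derivative)
  show ?thesis
  proof (rule that[of "D 1" "D 2"])
    show "continuous_on I01 f" by (rule DERIV_continuous_on[OF d1])
    show "continuous_on I01 (D 1)" by (rule DERIV_continuous_on[OF d2])
  qed (fact d1 d2 dp)+
qed

lemma Ck_alpha_Ck: "Ck_alpha k \<alpha> f \<Longrightarrow> Ck k f"
  unfolding Ck_alpha_def Ck_def by blast

lemma Ck_mono: "Ck 3 f \<Longrightarrow> Ck 2 f"
  unfolding Ck_def
proof (elim exE conjE, intro exI conjI)
  fix D assume D0: "\<forall>x\<in>I01. D 0 x = f x" and Dd: "\<forall>j<3. \<forall>x\<in>I01. (D j has_real_derivative D (Suc j) x) (at x within I01)"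
  show "\<forall>x\<in>I01. D 0 x = f x" by fact
  show "\<forall>j<2. \<forall>x\<in>I01. (D j has_real_derivative D (Suc j) x) (at x within I01)" using Dd by auto
  show "continuous_on I01 (D 2)"
    by (rule DERIV_continuous_on[of _ _ "D 3"]) (use Dd in \<open>auto simp: numeral_3_eq_3 numeral_2_eq_2\<close>)
qed

theorem lemma4p9:
  fixes \<alpha> F :: real and \<rho> H K :: "real \<Rightarrow> real"
  assumes "0 < \<alpha>" and "\<alpha> < 1"
    and "Ck_alpha 2 \<alpha> \<rho>" and "\<forall>p\<in>{-1..0}. \<rho> p > 0" and "\<forall>p\<in>{-1..0}. dp \<rho> p \<le> 0"
    and "Ck_alpha 3 \<alpha> H" and "H (-1) = 0" and "H 0 = 1" and "\<forall>p\<in>{-1..0}. dp H p > 0"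
    and "F > 0"
    and "Ck 2 K" and "\<forall>p\<in>{-1..0}. dp K p > 0"
    and "height_eq \<rho> H F (\<lambda>(q, p). K p)"
    and "flow_force \<rho> H F K = flow_force \<rho> H F H"
  shows "integral {-1..0} (\<lambda>p. (dp K p - dp H p) ^ 3 / ((dp H p)\<^sup>2 * (dp K p)\<^sup>2)) = 0"
proof -
  note Fpos = \<open>F > 0\<close>
  obtain K1 K2 where Kd: "\<And>x. x \<in> I01 \<Longrightarrow> (K has_real_derivative K1 x) (at x within I01)"
    and K1d: "\<And>x. x \<in> I01 \<Longrightarrow> (K1 has_real_derivative K2 x) (at x within I01)"
    and dpK: "\<And>x. x \<in> I01 \<Longrightarrow> dp K x = K1 x"
    and Kc: "continuous_on I01 K" and K1c: "continuous_on I01 K1"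
    by (rule Ck_facts[OF \<open>Ck 2 K\<close>]) blast
  obtain H1 H2 where Hd: "\<And>x. x \<in> I01 \<Longrightarrow> (H has_real_derivative H1 x) (at x within I01)"
    and H1d: "\<And>x. x \<in> I01 \<Longrightarrow> (H1 has_real_derivative H2 x) (at x within I01)"
    and dpH: "\<And>x. x \<in> I01 \<Longrightarrow> dp H x = H1 x"
    and Hc: "continuous_on I01 H" and H1c: "continuous_on I01 H1"
    by (rule Ck_facts[OF Ck_mono[OF Ck_alpha_Ck[OF \<open>Ck_alpha 3 \<alpha> H\<close>]]]) blast
  obtain r1 r2 where rd: "\<And>x. x \<in> I01 \<Longrightarrow> (\<rho> has_real_derivative r1 x) (at x within I01)"
    and r1d: "\<And>x. x \<in> I01 \<Longrightarrow> (r1 has_real_derivative r2 x) (at x within I01)"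
    and dpr: "\<And>x. x \<in> I01 \<Longrightarrow> dp \<rho> x = r1 x"
    and rc: "continuous_on I01 \<rho>" and r1c: "continuous_on I01 r1"
    by (rule Ck_facts[OF Ck_alpha_Ck[OF \<open>Ck_alpha 2 \<alpha> \<rho>\<close>]]) blast
  have K1pos: "\<And>x. x \<in> I01 \<Longrightarrow> K1 x > 0" using assms(12) dpK by fastforce
  have H1pos: "\<And>x. x \<in> I01 \<Longrightarrow> H1 x > 0" using assms(9) dpH by fastforce
  have rpos: "\<And>x. x \<in> I01 \<Longrightarrow> \<rho> x > 0" using assms(4) by auto
  have int_at: "(f has_real_derivative D) (at x)" if "(f has_real_derivative D) (at x within I01)" "x \<in> {-1<..<0}" for f D x
  proof -
    have "(f has_real_derivative D) (at x within {-1<..<0})"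
      by (rule has_field_derivative_subset[OF that(1)]) auto
    thus ?thesis using at_within_open[of x "{-1<..<0}"] that(2) by simp
  qed
  define h :: "real \<times> real \<Rightarrow> real" where "h = (\<lambda>(q, p). K p)"
  have hq0: "hq h q s = 0" for q s unfolding hq_def h_def by simp
  have hpK: "hp h q s = dp K s" for q s unfolding hp_def h_def dp_def by simp
  have HE: "height_eq \<rho> H F h" using assms(13) h_def by simp
  have h00: "h(0,0) = K 0" by (simp add: h_def)
  define \<Psi> where "\<Psi> = (\<lambda>s. 1/(2*(dp H s)\<^sup>2) - 1/(2*(dp K s)\<^sup>2))"
  have lam: "(\<lambda>s. - (1 + (0::real)\<^sup>2) / (2 * (hp h 0 s)\<^sup>2) + 1 / (2 * (dp H s)\<^sup>2)) = \<Psi>"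
    by (rule ext) (simp add: hq0 hpK \<Psi>_def)
  have pde: "vector_derivative \<Psi> (at p) = 1/F\<^sup>2 * dp \<rho> p * (K p - H p)" if "-1 < p" "p < 0" for p
  proof -
    have "vector_derivative (\<lambda>s. -(1+(hq h 0 s)\<^sup>2)/(2*(hp h 0 s)\<^sup>2) + 1/(2*(dp H s)\<^sup>2)) (at p)
       + vector_derivative (\<lambda>s. hq h s p / hp h s p) (at 0) - 1/F\<^sup>2*dp \<rho> p*(h(0,p) - H p) = 0"
      using HE that unfolding height_eq_def by blast
    hence "vector_derivative \<Psi> (at p) + vector_derivative (\<lambda>s. 0 / hp h s p) (at 0) - 1/F\<^sup>2*dp \<rho> p*(h(0,p) - H p) = 0"
      by (simp only: lam hq0)
    thus ?thesis by (simp add: h_def)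
  qed
  have bdry: "\<Psi> 0 = \<rho> 0 * (K 0 - H 0) / F\<^sup>2"
  proof -
    have "(1 + (hq h 0 0)\<^sup>2) / (2 * (hp h 0 0)\<^sup>2) - 1 / (2 * (dp H 0)\<^sup>2)
          + 1 / F\<^sup>2 * \<rho> 0 * (h (0, 0) - 1) = 0"
      using HE unfolding height_eq_def by blast
    hence "1 / (2 * (dp K 0)\<^sup>2) - 1 / (2 * (dp H 0)\<^sup>2) + 1 / F\<^sup>2 * \<rho> 0 * (K 0 - H 0) = 0"
      by (simp add: hq0 hpK h00 assms(8))
    thus ?thesis unfolding \<Psi>_def by (simp add: field_simps)
  qed
  have Km1: "K (-1) = 0"
    using HE unfolding height_eq_def h_def by auto

  have Psi_eq: "\<Psi> x = 1/(2*(H1 x)\<^sup>2) - 1/(2*(K1 x)\<^sup>2)" if "x \<in> I01" for x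
    using that by (simp add: \<Psi>_def dpK dpH)
  have Psi_c: "continuous_on I01 \<Psi>"
  proof (rule continuous_on_eq[OF _ Psi_eq[symmetric]])
    show "continuous_on I01 (\<lambda>x. 1/(2*(H1 x)\<^sup>2) - 1/(2*(K1 x)\<^sup>2))"
      using K1pos H1pos by (auto intro!: continuous_intros H1c K1c) (metis atLeastAtMost_iff less_irrefl)+
  qed
  have Psi_d: "(\<Psi> has_real_derivative (r1 p * (K p - H p) / F\<^sup>2)) (at p)" if "-1 < p" "p < 0" for p
  proof -
    have pI: "p \<in> I01" "p \<in> {-1<..<0}" using that by auto
    have K1p: "K1 p > 0" "H1 p > 0" using pI K1pos H1pos by auto
    have "((\<lambda>s. 1/(2*(H1 s)\<^sup>2) - 1/(2*(K1 s)\<^sup>2)) has_real_derivative (K2 p/(K1 p)^3 - H2 p/(H1 p)^3)) (at p)"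
      using int_at[OF H1d[OF pI(1)] pI(2)] int_at[OF K1d[OF pI(1)] pI(2)] K1p
      by (auto intro!: derivative_eq_intros simp: field_simps power2_eq_square power3_eq_cube)
    hence d: "(\<Psi> has_real_derivative (K2 p/(K1 p)^3 - H2 p/(H1 p)^3)) (at p)"
      by (rule has_field_derivative_transform_within_open[where S="{-1<..<0}"]) (use pI Psi_eq in auto)
    hence "vector_derivative \<Psi> (at p) = K2 p/(K1 p)^3 - H2 p/(H1 p)^3"
      by (simp add: has_real_derivative_iff_has_vector_derivative vector_derivative_at)
    with pde[OF that] d dpr[OF pI(1)] show ?thesis by simp
  qed
  define g where "g = (\<lambda>t. \<rho> t * (dp K t - dp H t))"
  define m where "m = (\<lambda>t. \<rho> t * dp H t)"
  have gc: "continuous_on I01 g"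
    by (rule continuous_on_eq[of _ "\<lambda>t. \<rho> t * (K1 t - H1 t)"])
       (auto intro!: continuous_intros rc K1c H1c simp: g_def dpK dpH)
  have mc: "continuous_on I01 m"
    by (rule continuous_on_eq[of _ "\<lambda>t. \<rho> t * H1 t"])
       (auto intro!: continuous_intros rc H1c simp: m_def dpH)
  define Nt where "Nt = (\<lambda>s. integral I01 g - integral {-1..s} g)"
  define Mt where "Mt = (\<lambda>s. integral I01 m - integral {-1..s} m)"
  have Nt_eq: "Nt x = integral {x..0} g" if "x \<in> I01" for x
    using Henstock_Kurzweil_Integration.integral_combine[where a="-1" and c=x and b=0 and f=g] that integrable_continuous_interval[OF gc]
    by (auto simp: Nt_def)
  have Mt_eq: "Mt x = integral {x..0} m" if "x \<in> I01" for x
    using Henstock_Kurzweil_Integration.integral_combine[where a="-1" and c=x and b=0 and f=m] that integrable_continuous_interval[OF mc]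
    by (auto simp: Mt_def)
  have Nt_d: "(Nt has_real_derivative (- g x)) (at x within I01)" if "x \<in> I01" for x
  proof -
    have "((\<lambda>u. integral {-1..u} g) has_real_derivative g x) (at x within I01)"
      using integral_has_vector_derivative[OF gc that] by (simp add: has_real_derivative_iff_has_vector_derivative)
    from DERIV_diff[OF DERIV_const this] show ?thesis unfolding Nt_def by simp
  qed
  have Mt_d: "(Mt has_real_derivative (- m x)) (at x within I01)" if "x \<in> I01" for x
  proof -
    have "((\<lambda>u. integral {-1..u} m) has_real_derivative m x) (at x within I01)"
      using integral_has_vector_derivative[OF mc that] by (simp add: has_real_derivative_iff_has_vector_derivative)
    from DERIV_diff[OF DERIV_const this] show ?thesis unfolding Mt_def by simp
  qed
  have Nt_c: "continuous_on I01 Nt" by (rule DERIV_continuous_on[OF Nt_d])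
  have Mt_c: "continuous_on I01 Mt" by (rule DERIV_continuous_on[OF Mt_d])
  have Nt0: "Nt 0 = 0" by (simp add: Nt_def)
  have Mt0: "Mt 0 = 0" by (simp add: Mt_def)

  define G where "G = (\<lambda>s. \<Psi> s - (\<rho> s * (K s - H s) + Nt s) / F\<^sup>2)"
  have G_c: "continuous_on I01 G" unfolding G_def
    using Fpos by (intro continuous_intros Psi_c rc Kc Hc Nt_c) auto
  have G_d: "(G has_real_derivative 0) (at p)" if "-1 < p" "p < 0" for p
  proof -
    have pI: "p \<in> I01" "p \<in> {-1<..<0}" using that by auto
    have "(G has_real_derivative (r1 p * (K p - H p) / F\<^sup>2
            - (r1 p * (K p - H p) + \<rho> p * (K1 p - H1 p) + (- g p)) / F\<^sup>2)) (at p)"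
      unfolding G_def
      by (rule DERIV_diff[OF Psi_d[OF that] DERIV_cdivide[OF DERIV_add[OF DERIV_cong[OF DERIV_mult[OF
            int_at[OF rd[OF pI(1)] pI(2)] DERIV_diff[OF int_at[OF Kd[OF pI(1)] pI(2)] int_at[OF Hd[OF pI(1)] pI(2)]]]]
            int_at[OF Nt_d[OF pI(1)] pI(2)]]]]) simp
    moreover have "g p = \<rho> p * (K1 p - H1 p)" using pI by (simp add: g_def dpK dpH)
    ultimately show ?thesis by (simp add: field_simps)
  qed
  have G0: "G 0 = 0" unfolding G_def using bdry Nt0 by (simp add: field_simps)
  have Gz: "G x = 0" if "x \<in> I01" for x
  proof (cases "x = 0")
    case True thus ?thesis using G0 by simp
  next
    case False
    hence "x < 0" using that by auto
    have "G 0 = G x"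
      by (rule DERIV_isconst_end[OF \<open>x < 0\<close> continuous_on_subset[OF G_c]])
         (use that in \<open>auto intro: G_d\<close>)
    thus ?thesis using G0 by simp
  qed

  define u where "u = (\<lambda>s. K s - H s)"
  define P where "P = (\<lambda>s. (Mt s + Nt s / 2) * u s / F\<^sup>2)"
  define P' where "P' = (\<lambda>x. ((-(\<rho> x * dp H x) - \<rho> x * (dp K x - dp H x) / 2) * u x
                             + (Mt x + Nt x / 2) * (dp K x - dp H x)) / F\<^sup>2)"
  have P_d: "(P has_real_derivative P' x) (at x within I01)" if "x \<in> I01" for x
  proof -
    have "(P has_real_derivative ((- m x + - g x / 2) * u x + (Mt x + Nt x / 2) * (K1 x - H1 x)) / F\<^sup>2) (at x within I01)"
      unfolding P_def u_def
      by (rule DERIV_cong[OF DERIV_cdivide[OF DERIV_mult[OF DERIV_add[OF Mt_d[OF that] DERIV_cdivide[OF Nt_d[OF that]]]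
            DERIV_diff[OF Kd[OF that] Hd[OF that]]]]]) (simp add: algebra_simps)
    thus ?thesis unfolding P'_def m_def g_def using that by (simp add: dpK dpH field_simps)
  qed
  have FTC: "(P' has_integral (P 0 - P (-1))) I01"
    by (rule fundamental_theorem_of_calculus) (auto simp: has_real_derivative_iff_has_vector_derivative[symmetric] intro: P_d)
  have P0: "P 0 = 0" "P (-1) = 0" using Mt0 Nt0 Km1 assms(7) by (auto simp: P_def u_def)
  define fK where "fK = (\<lambda>p. (1 / (2 * (dp K p)\<^sup>2) + 1 / (2 * (dp H p)\<^sup>2) - 1 / F\<^sup>2 * \<rho> p * (K p - H p)
       - 1 / F\<^sup>2 * (- integral {p..0} (\<lambda>s. \<rho> s * dp H s))) * dp K p)"
  define fH where "fH = (\<lambda>p. (1 / (2 * (dp H p)\<^sup>2) + 1 / (2 * (dp H p)\<^sup>2) - 1 / F\<^sup>2 * \<rho> p * (H p - H p)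
       - 1 / F\<^sup>2 * (- integral {p..0} (\<lambda>s. \<rho> s * dp H s))) * dp H p)"
  define t where "t = (\<lambda>p. (dp K p - dp H p) ^ 3 / ((dp H p)\<^sup>2 * (dp K p)\<^sup>2))"
  have ffK: "flow_force \<rho> H F K = integral I01 fK" unfolding flow_force_def fK_def ..
  have ffH: "flow_force \<rho> H F H = integral I01 fH" unfolding flow_force_def fH_def ..
  have pw: "fK x = fH x + t x / 4 + P' x" if "x \<in> I01" for x
  proof -
    have a: "dp K x > 0" "dp H x > 0" using that assms(12) assms(9) by auto
    have hyp: "1/(2*(dp H x)\<^sup>2) - 1/(2*(dp K x)\<^sup>2) = (\<rho> x * u x + Nt x)/F\<^sup>2"
      using Gz[OF that] unfolding G_def \<Psi>_def u_def by simp
    have Mx: "integral {x..0} (\<lambda>s. \<rho> s * dp H s) = Mt x" using Mt_eq[OF that] by (simp add: m_def)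
    have "fK x - fH x - t x / 4 = P' x"
      unfolding fK_def fH_def t_def P'_def Mx
      using alg[OF a Fpos hyp, of "Mt x" "H x"] by (simp add: u_def)
    thus ?thesis by simp
  qed
  have tc: "continuous_on I01 t"
  proof (rule continuous_on_eq[of _ "\<lambda>p. (K1 p - H1 p) ^ 3 / ((H1 p)\<^sup>2 * (K1 p)\<^sup>2)"])
    show "continuous_on I01 (\<lambda>p. (K1 p - H1 p) ^ 3 / ((H1 p)\<^sup>2 * (K1 p)\<^sup>2))"
      using K1pos H1pos by (auto intro!: continuous_intros H1c K1c) (metis atLeastAtMost_iff less_irrefl)+
  qed (auto simp: t_def dpK dpH)
  have fHc: "continuous_on I01 fH"
  proof (rule continuous_on_eq[of _ "\<lambda>p. (1 / (2 * (H1 p)\<^sup>2) + 1 / (2 * (H1 p)\<^sup>2) - 1 / F\<^sup>2 * (- Mt p)) * H1 p"])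
    show "continuous_on I01 (\<lambda>p. (1 / (2 * (H1 p)\<^sup>2) + 1 / (2 * (H1 p)\<^sup>2) - 1 / F\<^sup>2 * (- Mt p)) * H1 p)"
      using H1pos Fpos by (auto intro!: continuous_intros H1c Mt_c) (metis atLeastAtMost_iff less_irrefl)+
  qed (auto simp: fH_def dpH Mt_eq m_def)
  have iH: "(fH has_integral integral I01 fH) I01" using integrable_continuous_interval[OF fHc] by auto
  have it: "(t has_integral integral I01 t) I01" using integrable_continuous_interval[OF tc] by auto
  have "((\<lambda>x. fH x + t x / 4 + P' x) has_integral (integral I01 fH + integral I01 t / 4 + (P 0 - P (-1)))) I01"
    by (intro has_integral_add iH FTC has_integral_divide it)
  hence "(fK has_integral (integral I01 fH + integral I01 t / 4)) I01"
    using P0 by (subst has_integral_cong[OF pw]) auto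
  hence "integral I01 fK = integral I01 fH + integral I01 t / 4" by (rule integral_unique)
  hence "integral I01 t = 0" using assms(14) ffK ffH by simp
  thus ?thesis unfolding t_def .
qed

end
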